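(* For every positive integer $n$, $N'(n,n-1,0)=\frac{n(n+1)}{2}-1$.
   Context: $\mathbb{Z}_4$ is the ring of integers modulo $4$; a $\mathbb{Z}_4$-code of length $n$ is a $\mathbb{Z}_4$-submodule of $\mathbb{Z}_4^n$. Two codes are equivalent if one is obtained from the other by permuting coordinates and changing the signs of some coordinates. Every $\mathbb{Z}_4$-code is permutation-equivalent to one with generator matrix $\begin{pmatrix} I_{k_1} & A & B \\ O & 2I_{k_2} & 2D\end{pmatrix}$ with $A,D$ $(0,1)$-matrices and $B$ a $\mathbb{Z}_4$-matrix; the code then has type $4^{k_1}2^{k_2}$. The trivial extension of a code $C$ of length $n-1$ is $\{(c,0)\mid c\in C\}$ (the only code of length $0$ is the zero code). $N'(n,k_1,k_2)$ denotes the number of equivalence classes of $\mathbb{Z}_4$-codes of length $n$ and type $4^{k_1}2^{k_2}$ that are not equivalent to the trivial extension of any $\mathbb{Z}_4$-code of length $n-1$. *)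

theory Defs
  imports "HOL-Combinatorics.Permutations"
begin

text \<open>Vectors over Z_m of length n: functions nat => int with entries in {0..m-1},
  supported on {0..<n}.  Z_4^n is modelled with m = 4.\<close>

definition zvec :: "int \<Rightarrow> nat \<Rightarrow> (nat \<Rightarrow> int) \<Rightarrow> bool" where
  "zvec m n f \<longleftrightarrow> (\<forall>i. 0 \<le> f i \<and> f i < m) \<and> (\<forall>i\<ge>n. f i = 0)"

definition add_mod :: "int \<Rightarrow> (nat \<Rightarrow> int) \<Rightarrow> (nat \<Rightarrow> int) \<Rightarrow> nat \<Rightarrow> int" where
  "add_mod m x y = (\<lambda>i. (x i + y i) mod m)"

definition is_code :: "nat \<Rightarrow> (nat \<Rightarrow> int) set \<Rightarrow> bool" where
  "is_code n C \<longleftrightarrow> C \<subseteq> {f. zvec 4 n f} \<and> (\<lambda>_. 0) \<in> C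
     \<and> (\<forall>x\<in>C. \<forall>y\<in>C. add_mod 4 x y \<in> C)
     \<and> (\<forall>a::int. \<forall>x\<in>C. (\<lambda>i. (a * x i) mod 4) \<in> C)"

definition has_type :: "(nat \<Rightarrow> int) set \<Rightarrow> nat \<Rightarrow> nat \<Rightarrow> bool" where
  "has_type C k1 k2 \<longleftrightarrow> (\<exists>\<phi>.
     bij_betw \<phi> C {(a, b). zvec 4 k1 a \<and> zvec 2 k2 b} \<and>
     (\<forall>x\<in>C. \<forall>y\<in>C. \<phi> (add_mod 4 x y) =
        (add_mod 4 (fst (\<phi> x)) (fst (\<phi> y)), add_mod 2 (snd (\<phi> x)) (snd (\<phi> y)))))"

definition code_equiv :: "nat \<Rightarrow> (nat \<Rightarrow> int) set \<Rightarrow> (nat \<Rightarrow> int) set \<Rightarrow> bool" where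
  "code_equiv n C D \<longleftrightarrow> (\<exists>\<sigma> s. \<sigma> permutes {0..<n} \<and> (\<forall>i. s i \<in> {1, -1::int}) \<and>
     D = (\<lambda>c. \<lambda>i. (s i * c (\<sigma> i)) mod 4) ` C)"

text \<open>Trivial extension of a code of length n-1 to length n: append a zero coordinate
  (coordinate n-1).  With our representation this is the same set of functions.\<close>
definition triv_ext :: "(nat \<Rightarrow> int) set \<Rightarrow> (nat \<Rightarrow> int) set" where
  "triv_ext D = {c. c \<in> D}"

definition codes_nontriv :: "nat \<Rightarrow> nat \<Rightarrow> nat \<Rightarrow> (nat \<Rightarrow> int) set set" where
  "codes_nontriv n k1 k2 = {C. is_code n C \<and> has_type C k1 k2 \<and>
     \<not> (\<exists>D. is_code (n - 1) D \<and> code_equiv n C (triv_ext D))}"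

definition Nprime :: "nat \<Rightarrow> nat \<Rightarrow> nat \<Rightarrow> nat" where
  "Nprime n k1 k2 = card (codes_nontriv n k1 k2 //
     {(C, D). C \<in> codes_nontriv n k1 k2 \<and> D \<in> codes_nontriv n k1 k2 \<and> code_equiv n C D})"

end

theory Submission
  imports Defs
begin

definition T :: "(nat \<Rightarrow> nat) \<Rightarrow> (nat \<Rightarrow> int) \<Rightarrow> (nat \<Rightarrow> int) \<Rightarrow> nat \<Rightarrow> int" where
  "T \<sigma> s c = (\<lambda>i. (s i * c (\<sigma> i)) mod 4)"

definition ev :: "nat \<Rightarrow> int \<Rightarrow> nat \<Rightarrow> int" where
  "ev p r = (\<lambda>k. if k = p then r else 0)"

definition Kv :: "nat \<Rightarrow> (nat \<Rightarrow> int) \<Rightarrow> (nat \<Rightarrow> int) set" where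
  "Kv n v = {x. zvec 4 n x \<and> (\<Sum>i<n. v i * x i) mod 4 = 0}"

definition signs :: "(nat \<Rightarrow> int) \<Rightarrow> bool" where
  "signs s \<longleftrightarrow> (\<forall>i. s i \<in> {1, -1::int})"

lemma code_equiv_T: "code_equiv n C D \<longleftrightarrow> (\<exists>\<sigma> s. \<sigma> permutes {0..<n} \<and> signs s \<and> D = T \<sigma> s ` C)"
  unfolding code_equiv_def T_def signs_def by simp

lemma sign_sq: "signs s \<Longrightarrow> s i * s i = 1"
  unfolding signs_def by (cases "s i = 1") auto

lemma sign_cancel: "signs s \<Longrightarrow> 0 \<le> x \<Longrightarrow> x < 4 \<Longrightarrow> (s i * ((s i * x) mod 4)) mod 4 = x"
proof -
  assume s: "signs s" and x: "0 \<le> x" "x < 4"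
  have "(s i * ((s i * x) mod 4)) mod 4 = (s i * (s i * x)) mod 4" by (simp add: mod_mult_right_eq)
  also have "\<dots> = x mod 4" using sign_sq[OF s, of i] by (simp add: mult.assoc[symmetric])
  finally show ?thesis using x by simp
qed

lemma zvecD: "zvec m n f \<Longrightarrow> 0 \<le> f i \<and> f i < m" and zvecD2: "zvec m n f \<Longrightarrow> n \<le> i \<Longrightarrow> f i = 0"
  unfolding zvec_def by auto

lemma is_codeD: assumes "is_code n C"
  shows "C \<subseteq> {f. zvec 4 n f}" "(\<lambda>_. 0) \<in> C" "x \<in> C \<Longrightarrow> y \<in> C \<Longrightarrow> add_mod 4 x y \<in> C"
    "x \<in> C \<Longrightarrow> (\<lambda>i. (a * x i) mod 4) \<in> C"
  using assms unfolding is_code_def by auto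

lemma T_zvec: "\<sigma> permutes {0..<n} \<Longrightarrow> zvec 4 n c \<Longrightarrow> zvec 4 n (T \<sigma> s c)"
  unfolding zvec_def T_def by (auto simp: permutes_not_in)

lemma T_inj: assumes "\<sigma> permutes {0..<n}" "signs s" "zvec 4 n x" "zvec 4 n y" "T \<sigma> s x = T \<sigma> s y"
  shows "x = y"
proof
  fix j
  obtain i where i: "\<sigma> i = j" using permutes_surj[OF assms(1)] by (metis surjD)
  have "T \<sigma> s x i = T \<sigma> s y i" using assms(5) by simp
  hence "(s i * ((s i * x j) mod 4)) mod 4 = (s i * ((s i * y j) mod 4)) mod 4" using i by (simp add: T_def)
  thus "x j = y j" using sign_cancel[OF assms(2)] zvecD[OF assms(3)] zvecD[OF assms(4)] by metis
qed

lemma is_code_T: assumes "is_code n C" "\<sigma> permutes {0..<n}" "signs s"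
  shows "is_code n (T \<sigma> s ` C)"
  unfolding is_code_def
proof (intro conjI ballI allI)
  show "T \<sigma> s ` C \<subseteq> {f. zvec 4 n f}" using is_codeD(1)[OF assms(1)] T_zvec[OF assms(2)] by auto
  show "(\<lambda>_. 0) \<in> T \<sigma> s ` C"
  proof
    show "(\<lambda>_. 0) = T \<sigma> s (\<lambda>_. 0)" by (simp add: T_def)
  qed (rule is_codeD(2)[OF assms(1)])
next
  fix x y assume "x \<in> T \<sigma> s ` C" "y \<in> T \<sigma> s ` C"
  then obtain x' y' where xy: "x' \<in> C" "y' \<in> C" "x = T \<sigma> s x'" "y = T \<sigma> s y'" by auto
  have "add_mod 4 x y = T \<sigma> s (add_mod 4 x' y')"
    unfolding xy add_mod_def T_def by (auto simp: mod_simps algebra_simps)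
  thus "add_mod 4 x y \<in> T \<sigma> s ` C" using is_codeD(3)[OF assms(1) xy(1,2)] by auto
next
  fix a x assume "x \<in> T \<sigma> s ` C"
  then obtain x' where xy: "x' \<in> C" "x = T \<sigma> s x'" by auto
  have "(\<lambda>i. (a * x i) mod 4) = T \<sigma> s (\<lambda>i. (a * x' i) mod 4)"
    unfolding xy T_def by (auto simp: mod_simps algebra_simps)
  thus "(\<lambda>i. (a * x i) mod 4) \<in> T \<sigma> s ` C" using is_codeD(4)[OF assms(1) xy(1)] by auto
qed

lemma code_equiv_sym: assumes "code_equiv n C D" "C \<subseteq> {f. zvec 4 n f}"
  shows "code_equiv n D C"
proof -
  obtain \<sigma> s where h: "\<sigma> permutes {0..<n}" "signs s" "D = T \<sigma> s ` C" using assms(1) code_equiv_T by blast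
  have p: "inv \<sigma> permutes {0..<n}" using permutes_inv[OF h(1)] .
  have sg: "signs (s \<circ> inv \<sigma>)" using h(2) unfolding signs_def by auto
  have "T (inv \<sigma>) (s \<circ> inv \<sigma>) (T \<sigma> s c) = c" if "c \<in> C" for c
  proof
    fix j
    have z: "0 \<le> c j" "c j < 4" using zvecD[of 4 n c j] that assms(2) by auto
    show "T (inv \<sigma>) (s \<circ> inv \<sigma>) (T \<sigma> s c) j = c j"
      unfolding T_def using sign_cancel[OF h(2) z] by (simp add: permutes_inverses[OF h(1)])
  qed
  hence "T (inv \<sigma>) (s \<circ> inv \<sigma>) ` D = C" unfolding h(3) image_image by simp
  thus ?thesis unfolding code_equiv_T using p sg by metis
qed

lemma code_equiv_trans: assumes "code_equiv n C D" "code_equiv n D E"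
  shows "code_equiv n C E"
proof -
  obtain \<sigma> s where h: "\<sigma> permutes {0..<n}" "signs s" "D = T \<sigma> s ` C" using assms(1) code_equiv_T by blast
  obtain \<tau> t where g: "\<tau> permutes {0..<n}" "signs t" "E = T \<tau> t ` D" using assms(2) code_equiv_T by blast
  have p: "\<sigma> \<circ> \<tau> permutes {0..<n}" using permutes_compose[OF g(1) h(1)] .
  have sg: "signs (\<lambda>i. t i * s (\<tau> i))" unfolding signs_def
  proof
    fix i
    have "t i = 1 \<or> t i = -1" "s (\<tau> i) = 1 \<or> s (\<tau> i) = -1" using h(2) g(2) unfolding signs_def by auto
    thus "t i * s (\<tau> i) \<in> {1, -1}" by auto
  qed
  have "T \<tau> t (T \<sigma> s c) = T (\<sigma> \<circ> \<tau>) (\<lambda>i. t i * s (\<tau> i)) c" for c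
    unfolding T_def by (auto simp: mod_simps algebra_simps)
  hence "E = T (\<sigma> \<circ> \<tau>) (\<lambda>i. t i * s (\<tau> i)) ` C" unfolding g(3) h(3) image_image by simp
  thus ?thesis unfolding code_equiv_T using p sg by metis
qed

lemma sum_mod_inner: "(\<Sum>i\<in>A. v i * (g i mod (4::int))) mod 4 = (\<Sum>i\<in>A. v i * g i) mod 4"
proof -
  have "(\<Sum>i\<in>A. v i * (g i mod (4::int))) mod 4 = (\<Sum>i\<in>A. (v i * (g i mod 4)) mod 4) mod 4"
    by (simp add: mod_sum_eq)
  also have "\<dots> = (\<Sum>i\<in>A. (v i * g i) mod 4) mod 4" by (simp add: mod_mult_right_eq)
  also have "\<dots> = (\<Sum>i\<in>A. v i * g i) mod 4" by (simp add: mod_sum_eq)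
  finally show ?thesis .
qed

lemma sum_mod_inner2: "(\<Sum>i\<in>A. (v i mod (4::int)) * g i) mod 4 = (\<Sum>i\<in>A. v i * g i) mod 4"
  using sum_mod_inner[of g v A] by (simp add: mult.commute)

lemma Kv_cong: assumes "\<And>i. i < n \<Longrightarrow> v i mod 4 = w i mod 4" shows "Kv n v = Kv n w"
proof -
  have "(\<Sum>i<n. v i * x i) mod 4 = (\<Sum>i<n. w i * x i) mod 4" for x
  proof -
    have "(\<Sum>i<n. v i * x i) mod 4 = (\<Sum>i<n. (v i mod 4) * x i) mod 4" by (rule sum_mod_inner2[symmetric])
    also have "\<dots> = (\<Sum>i<n. (w i mod 4) * x i) mod 4" using assms by (auto intro!: arg_cong[where f="\<lambda>x. x mod 4"] sum.cong)
    also have "\<dots> = (\<Sum>i<n. w i * x i) mod 4" by (rule sum_mod_inner2)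
    finally show ?thesis .
  qed
  thus ?thesis unfolding Kv_def by simp
qed

lemma is_code_Kv: "is_code n (Kv n v)"
  unfolding is_code_def
proof (intro conjI ballI allI)
  show "Kv n v \<subseteq> {f. zvec 4 n f}" unfolding Kv_def by auto
  show "(\<lambda>_. 0) \<in> Kv n v" unfolding Kv_def zvec_def by auto
next
  fix x y assume x: "x \<in> Kv n v" and y: "y \<in> Kv n v"
  have "(\<Sum>i<n. v i * add_mod 4 x y i) mod 4 = (\<Sum>i<n. v i * (x i + y i)) mod 4"
    unfolding add_mod_def by (rule sum_mod_inner)
  also have "\<dots> = ((\<Sum>i<n. v i * x i) + (\<Sum>i<n. v i * y i)) mod 4" by (simp add: algebra_simps sum.distrib)
  also have "\<dots> = 0" using x y unfolding Kv_def by (simp add: mod_add_eq[symmetric])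
  finally show "add_mod 4 x y \<in> Kv n v" using x y unfolding Kv_def zvec_def add_mod_def by auto
next
  fix a x assume x: "x \<in> Kv n v"
  have "(\<Sum>i<n. v i * ((a * x i) mod 4)) mod 4 = (\<Sum>i<n. v i * (a * x i)) mod 4"
    by (rule sum_mod_inner)
  also have "\<dots> = (a * (\<Sum>i<n. v i * x i)) mod 4" by (simp add: algebra_simps sum_distrib_left)
  also have "\<dots> = 0" using x unfolding Kv_def by (simp add: mod_mult_right_eq[symmetric])
  finally show "(\<lambda>i. (a * x i) mod 4) \<in> Kv n v" using x unfolding Kv_def zvec_def by auto
qed

lemma sum_split_last: fixes n :: nat assumes "n \<ge> 1" shows "(\<Sum>i<n. f i) = (\<Sum>i<n-1. f i) + f (n - 1)"
proof -
  obtain m where "n = Suc m" using assms by (cases n) auto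
  thus ?thesis by (simp only: diff_Suc_1 sum.lessThan_Suc)
qed

lemma small_eq: fixes a b :: int assumes "0 \<le> a" "a < 4" "0 \<le> b" "b < 4" "a mod 4 = b mod 4" shows "a = b"
proof -
  have "a mod 4 = a" using assms(1,2) by (rule mod_pos_pos_trivial)
  moreover have "b mod 4 = b" using assms(3,4) by (rule mod_pos_pos_trivial)
  ultimately show ?thesis using assms(5) by linarith
qed

lemma cancel_mod4: fixes S a b :: int assumes "(S + a) mod 4 = 0" "(S + b) mod 4 = 0" shows "a mod 4 = b mod 4"
proof -
  have "(S + a) mod 4 = (S + b) mod 4" using assms by (simp only:)
  hence "4 dvd (S + a) - (S + b)" by (simp only: mod_eq_dvd_iff)
  moreover have "(S + a) - (S + b) = a - b" by simp
  ultimately have "4 dvd a - b" by (simp only:)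
  thus ?thesis by (simp only: mod_eq_dvd_iff)
qed

lemma has_type_Kv: assumes n: "n \<ge> 1" and v: "v (n-1) = 1"
  shows "has_type (Kv n v) (n-1) 0"
proof -
  define \<phi> where "\<phi> = (\<lambda>x::nat\<Rightarrow>int. (x(n-1 := 0), (\<lambda>_::nat. 0::int)))"
  have key: "(\<Sum>i<n. v i * x i) = (\<Sum>i<n-1. v i * x i) + x (n-1)" for x
    using sum_split_last[OF n, of "\<lambda>i. v i * x i"] v by simp
  have inj: "inj_on \<phi> (Kv n v)"
  proof
    fix x y assume x: "x \<in> Kv n v" and y: "y \<in> Kv n v" and e: "\<phi> x = \<phi> y"
    hence e1: "x(n-1 := 0) = y(n-1:=0)" unfolding \<phi>_def by simp
    have "(\<Sum>i<n-1. v i * x i) = (\<Sum>i<n-1. v i * y i)"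
    proof (rule sum.cong)
      fix i assume "i \<in> {..<n-1}"
      hence "i \<noteq> n-1" by auto
      thus "v i * x i = v i * y i" using fun_cong[OF e1, of i] by simp
    qed simp
    moreover have "((\<Sum>i<n-1. v i * x i) + x (n-1)) mod 4 = 0" "((\<Sum>i<n-1. v i * y i) + y (n-1)) mod 4 = 0"
      using x y key unfolding Kv_def by auto
    ultimately have m: "x (n-1) mod 4 = y (n-1) mod 4" by (metis cancel_mod4)
    have r: "0 \<le> x (n-1)" "x (n-1) < 4" "0 \<le> y (n-1)" "y (n-1) < 4"
      using x y unfolding Kv_def zvec_def by auto
    have "x (n-1) = y (n-1)" using small_eq[OF r m] .
    thus "x = y" using e1 by (metis fun_upd_triv fun_upd_upd)
  qed
  have img: "\<phi> ` Kv n v = {(a, b). zvec 4 (n-1) a \<and> zvec 2 0 b}"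
  proof (intro set_eqI iffI)
    fix p assume "p \<in> \<phi> ` Kv n v"
    then obtain x where x: "x \<in> Kv n v" "p = \<phi> x" by auto
    thus "p \<in> {(a, b). zvec 4 (n-1) a \<and> zvec 2 0 b}" unfolding \<phi>_def Kv_def zvec_def by auto
  next
    fix p assume "p \<in> {(a, b). zvec 4 (n-1) a \<and> zvec 2 0 b}"
    then obtain a b where p: "p = (a, b)" "zvec 4 (n-1) a" "zvec 2 0 b" by auto
    have b: "b = (\<lambda>_. 0)" using p(3) unfolding zvec_def by auto
    define x where "x = a(n-1 := (- (\<Sum>i<n-1. v i * a i)) mod 4)"
    have sx: "(\<Sum>i<n-1. v i * x i) = (\<Sum>i<n-1. v i * a i)" unfolding x_def by (intro sum.cong) auto
    have "x \<in> Kv n v" unfolding Kv_def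
    proof (intro CollectI conjI)
      show "zvec 4 n x" using p(2) unfolding zvec_def x_def by auto
      show "(\<Sum>i<n. v i * x i) mod 4 = 0" unfolding key sx
        by (simp add: x_def mod_add_right_eq)
    qed
    moreover have "\<phi> x = p" unfolding \<phi>_def x_def p(1) b using zvecD2[OF p(2), of "n-1"] by auto
    ultimately show "p \<in> \<phi> ` Kv n v" by blast
  qed
  have hom: "\<phi> (add_mod 4 x y) = (add_mod 4 (fst (\<phi> x)) (fst (\<phi> y)), add_mod 2 (snd (\<phi> x)) (snd (\<phi> y)))" for x y
    unfolding \<phi>_def add_mod_def by auto
  show ?thesis unfolding has_type_def using inj img hom unfolding bij_betw_def by blast
qed

definition inv0 :: "nat \<Rightarrow> (nat \<Rightarrow> int) set \<Rightarrow> nat" where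
  "inv0 n C = card {i. i < n \<and> ev i 1 \<in> C}"
definition inv2 :: "nat \<Rightarrow> (nat \<Rightarrow> int) set \<Rightarrow> nat" where
  "inv2 n C = card {i. i < n \<and> ev i 2 \<in> C}"

lemma ev_scale: assumes "is_code n C" "ev p a \<in> C" shows "ev p ((m * a) mod 4) \<in> C"
proof -
  have "(\<lambda>i. (m * ev p a i) mod 4) = ev p ((m * a) mod 4)" unfolding ev_def by auto
  thus ?thesis using is_codeD(4)[OF assms(1) assms(2), of m] by simp
qed

lemma T_ev: assumes "\<sigma> permutes {0..<n}" shows "T \<sigma> s (ev (\<sigma> i) r) = ev i ((s i * r) mod 4)"
proof
  fix k
  have "\<sigma> k = \<sigma> i \<longleftrightarrow> k = i" using permutes_inj[OF assms] by (auto dest: injD)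
  thus "T \<sigma> s (ev (\<sigma> i) r) k = ev i ((s i * r) mod 4) k" unfolding T_def ev_def by auto
qed

lemma T_ev_pre: assumes "\<sigma> permutes {0..<n}" "signs s" "zvec 4 n c" "T \<sigma> s c = ev i r"
  shows "c = ev (\<sigma> i) ((s i * r) mod 4)"
proof
  fix j
  define k where "k = inv \<sigma> j"
  have sk: "\<sigma> k = j" unfolding k_def using permutes_inverses(1)[OF assms(1)] by simp
  have "(s k * c j) mod 4 = ev i r k" using fun_cong[OF assms(4), of k] sk unfolding T_def by simp
  hence "(s k * ((s k * c j) mod 4)) mod 4 = (s k * ev i r k) mod 4" by simp
  hence cj: "c j = (s k * ev i r k) mod 4" using sign_cancel[OF assms(2)] zvecD[OF assms(3), of j] by simp
  have "j = \<sigma> i \<longleftrightarrow> k = i" using sk permutes_inj[OF assms(1)] by (auto dest: injD)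
  thus "c j = ev (\<sigma> i) ((s i * r) mod 4) j" using cj unfolding ev_def by auto
qed

lemma ev_in_T_iff: assumes "is_code n C" "\<sigma> permutes {0..<n}" "signs s" "r \<in> {1, 2}"
  shows "ev i r \<in> T \<sigma> s ` C \<longleftrightarrow> ev (\<sigma> i) r \<in> C"
proof
  have r: "0 \<le> r" "r < 4" using assms(4) by auto
  assume "ev i r \<in> T \<sigma> s ` C"
  then obtain c where c: "c \<in> C" "T \<sigma> s c = ev i r" by auto
  have "zvec 4 n c" using c(1) is_codeD(1)[OF assms(1)] by auto
  hence "c = ev (\<sigma> i) ((s i * r) mod 4)" using T_ev_pre[OF assms(2,3) _ c(2)] by simp
  hence "ev (\<sigma> i) ((s i * ((s i * r) mod 4)) mod 4) \<in> C" using ev_scale[OF assms(1)] c(1) by simp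
  thus "ev (\<sigma> i) r \<in> C" using sign_cancel[OF assms(3) r] by simp
next
  have r: "0 \<le> r" "r < 4" using assms(4) by auto
  assume "ev (\<sigma> i) r \<in> C"
  hence "ev i ((s i * r) mod 4) \<in> T \<sigma> s ` C" using T_ev[OF assms(2)] by (metis image_eqI)
  hence "ev i ((s i * ((s i * r) mod 4)) mod 4) \<in> T \<sigma> s ` C"
    using ev_scale[OF is_code_T[OF assms(1-3)]] by blast
  thus "ev i r \<in> T \<sigma> s ` C" using sign_cancel[OF assms(3) r] by simp
qed

lemma card_perm_pred: fixes n :: nat and \<sigma> :: "nat \<Rightarrow> nat" assumes "\<sigma> permutes {0..<n}"
  shows "card {i. i < n \<and> P (\<sigma> i)} = card {j. j < n \<and> P j}"
proof -
  have "\<sigma> ` {i. i < n \<and> P (\<sigma> i)} = {j. j < n \<and> P j}"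
  proof (intro set_eqI iffI)
    fix j assume "j \<in> \<sigma> ` {i. i < n \<and> P (\<sigma> i)}"
    then obtain i where i: "i < n" "P (\<sigma> i)" "j = \<sigma> i" by auto
    have "\<sigma> i < n" using Permutations.permutes_nat_less[OF assms i(1)] .
    thus "j \<in> {j. j < n \<and> P j}" using i by simp
  next
    fix j assume j: "j \<in> {j. j < n \<and> P j}"
    have "\<sigma> (inv \<sigma> j) = j" using permutes_inverses(1)[OF assms] .
    moreover have "inv \<sigma> j < n" using Permutations.permutes_nat_inv_less[OF assms] j by simp
    ultimately show "j \<in> \<sigma> ` {i. i < n \<and> P (\<sigma> i)}" using j by (metis (mono_tags, lifting) image_eqI mem_Collect_eq)
  qed
  moreover have "inj_on \<sigma> {i. i < n \<and> P (\<sigma> i)}" using permutes_inj_on[OF assms] .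
  ultimately show ?thesis by (metis card_image)
qed

lemma inv_equiv: assumes "is_code n C" "code_equiv n C D"
  shows "inv0 n D = inv0 n C" "inv2 n D = inv2 n C"
proof -
  obtain \<sigma> s where h: "\<sigma> permutes {0..<n}" "signs s" "D = T \<sigma> s ` C" using assms(2) code_equiv_T by blast
  have "{i. i < n \<and> ev i 1 \<in> D} = {i. i < n \<and> ev (\<sigma> i) 1 \<in> C}" using ev_in_T_iff[OF assms(1) h(1,2), of 1] h(3) by auto
  thus "inv0 n D = inv0 n C" unfolding inv0_def using card_perm_pred[OF h(1), of "\<lambda>j. ev j 1 \<in> C"] by simp
  have "{i. i < n \<and> ev i 2 \<in> D} = {i. i < n \<and> ev (\<sigma> i) 2 \<in> C}" using ev_in_T_iff[OF assms(1) h(1,2), of 2] h(3) by auto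
  thus "inv2 n D = inv2 n C" unfolding inv2_def using card_perm_pred[OF h(1), of "\<lambda>j. ev j 2 \<in> C"] by simp
qed

lemma T_Kv: assumes "\<sigma> permutes {0..<n}" "signs s"
  shows "T \<sigma> s ` Kv n v = Kv n (\<lambda>i. s i * v (\<sigma> i))"
proof (intro set_eqI iffI)
  have bij: "bij_betw \<sigma> {..<n} {..<n}" using permutes_imp_bij[OF assms(1)] by (simp add: atLeast0LessThan)
  fix y assume "y \<in> T \<sigma> s ` Kv n v"
  then obtain x where x: "x \<in> Kv n v" "y = T \<sigma> s x" by auto
  have zx: "zvec 4 n x" using x(1) unfolding Kv_def by auto
  have "(\<Sum>i<n. s i * v (\<sigma> i) * y i) mod 4 = (\<Sum>i<n. s i * v (\<sigma> i) * (s i * x (\<sigma> i))) mod 4"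
    unfolding x(2) T_def by (rule sum_mod_inner)
  also have "\<dots> = (\<Sum>i<n. v (\<sigma> i) * x (\<sigma> i)) mod 4"
  proof -
    have eq: "s i * v (\<sigma> i) * (s i * x (\<sigma> i)) = v (\<sigma> i) * x (\<sigma> i)" for i
    proof -
      have "s i * v (\<sigma> i) * (s i * x (\<sigma> i)) = (s i * s i) * (v (\<sigma> i) * x (\<sigma> i))" by (simp add: algebra_simps)
      thus ?thesis using sign_sq[OF assms(2), of i] by simp
    qed
    show ?thesis by (simp only: eq)
  qed
  also have "(\<Sum>i<n. v (\<sigma> i) * x (\<sigma> i)) = (\<Sum>i<n. v i * x i)"
    using sum.reindex_bij_betw[OF bij, of "\<lambda>i. v i * x i"] by simp
  finally show "y \<in> Kv n (\<lambda>i. s i * v (\<sigma> i))" using x zx T_zvec[OF assms(1) zx, of s] unfolding Kv_def by auto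
next
  have bij: "bij_betw \<sigma> {..<n} {..<n}" using permutes_imp_bij[OF assms(1)] by (simp add: atLeast0LessThan)
  fix y assume y: "y \<in> Kv n (\<lambda>i. s i * v (\<sigma> i))"
  have zy: "zvec 4 n y" using y unfolding Kv_def by auto
  define x where "x = T (inv \<sigma>) (s \<circ> inv \<sigma>) y"
  have p: "inv \<sigma> permutes {0..<n}" using permutes_inv[OF assms(1)] .
  have zx: "zvec 4 n x" unfolding x_def by (rule T_zvec[OF p zy])
  have Tx: "T \<sigma> s x = y"
  proof
    fix i
    show "T \<sigma> s x i = y i" unfolding x_def T_def
      using sign_cancel[OF assms(2) zvecD[OF zy, THEN conjunct1] zvecD[OF zy, THEN conjunct2]] by (simp add: permutes_inverses(2)[OF assms(1)])
  qed
  have "(\<Sum>i<n. v i * x i) mod 4 = (\<Sum>i<n. v (\<sigma> i) * x (\<sigma> i)) mod 4"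
    using sum.reindex_bij_betw[OF bij, of "\<lambda>i. v i * x i"] by simp
  also have "\<dots> = (\<Sum>i<n. v (\<sigma> i) * (s i * y i)) mod 4"
    unfolding x_def T_def by (simp add: permutes_inverses(2)[OF assms(1)] sum_mod_inner)
  also have "\<dots> = (\<Sum>i<n. s i * v (\<sigma> i) * y i) mod 4" by (simp add: algebra_simps)
  also have "\<dots> = 0" using y unfolding Kv_def by simp
  finally have "x \<in> Kv n v" using zx unfolding Kv_def by simp
  thus "y \<in> T \<sigma> s ` Kv n v" using Tx by auto
qed

definition cv :: "nat \<Rightarrow> nat \<Rightarrow> nat \<Rightarrow> int" where
  "cv c t i = (if i < c then 0 else if i < t then 2 else 1)"

definition canon :: "nat \<Rightarrow> nat \<Rightarrow> nat \<Rightarrow> (nat \<Rightarrow> int) set" where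
  "canon n c t = Kv n (cv c t)"

lemma mod0_small: fixes a :: int assumes "0 \<le> a" "a < 4" "a mod 4 = 0" shows "a = 0"
proof -
  have "a mod 4 = a" using assms(1,2) by (rule mod_pos_pos_trivial)
  thus ?thesis using assms(3) by linarith
qed

lemma sum_ev: assumes "p < n" shows "(\<Sum>k<n. v k * ev p r k) = v p * r"
proof -
  have "(\<Sum>k<n. v k * ev p r k) = (\<Sum>k<n. if k = p then v k * r else 0)"
    unfolding ev_def by (intro sum.cong) auto
  also have "\<dots> = v p * r" using assms by (simp add: sum.delta)
  finally show ?thesis .
qed

lemma zvec_ev: "p < n \<Longrightarrow> 0 \<le> r \<Longrightarrow> r < 4 \<Longrightarrow> zvec 4 n (ev p r)"
  unfolding zvec_def ev_def by auto

lemma ev_in_Kv: assumes "p < n" "0 \<le> r" "r < 4" shows "ev p r \<in> Kv n v \<longleftrightarrow> (v p * r) mod 4 = 0"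
  unfolding Kv_def using zvec_ev[OF assms] sum_ev[OF assms(1)] by simp

lemma two_in_Kv: assumes "p < n" "q < n" "p \<noteq> q" "0 \<le> a" "a < 4" "0 \<le> b" "b < 4"
  "(v p * a + v q * b) mod 4 = 0"
  shows "(\<lambda>k. ev p a k + ev q b k) \<in> Kv n v"
proof -
  have z: "zvec 4 n (\<lambda>k. ev p a k + ev q b k)" using assms(1-7) unfolding zvec_def ev_def by auto
  have "(\<Sum>k<n. v k * (ev p a k + ev q b k)) = (\<Sum>k<n. v k * ev p a k) + (\<Sum>k<n. v k * ev q b k)"
    by (simp add: algebra_simps sum.distrib)
  also have "\<dots> = v p * a + v q * b" using sum_ev[OF assms(1)] sum_ev[OF assms(2)] by simp
  finally show ?thesis using z assms(8) unfolding Kv_def by simp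
qed

lemma inv_canon: assumes "c \<le> t" "t < n"
  shows "inv0 n (canon n c t) = c" "inv2 n (canon n c t) = t"
proof -
  have "{i. i < n \<and> ev i 1 \<in> canon n c t} = {..<c}"
  proof (intro set_eqI iffI)
    fix i assume "i \<in> {i. i < n \<and> ev i 1 \<in> canon n c t}"
    hence "i < n" "(cv c t i * 1) mod 4 = 0" using ev_in_Kv[of i n 1] unfolding canon_def by auto
    thus "i \<in> {..<c}" unfolding cv_def by (auto split: if_splits)
  next
    fix i assume i: "i \<in> {..<c}"
    hence "i < n" using assms by simp
    moreover have "cv c t i = 0" using i unfolding cv_def by simp
    ultimately show "i \<in> {i. i < n \<and> ev i 1 \<in> canon n c t}" using ev_in_Kv[of i n 1] unfolding canon_def by simp
  qed
  thus "inv0 n (canon n c t) = c" unfolding inv0_def by simp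
  have "{i. i < n \<and> ev i 2 \<in> canon n c t} = {..<t}"
  proof (intro set_eqI iffI)
    fix i assume "i \<in> {i. i < n \<and> ev i 2 \<in> canon n c t}"
    hence "i < n" "(cv c t i * 2) mod 4 = 0" using ev_in_Kv[of i n 2] unfolding canon_def by auto
    thus "i \<in> {..<t}" using assms(1) unfolding cv_def by (auto split: if_splits)
  next
    fix i assume i: "i \<in> {..<t}"
    hence "i < n" using assms by simp
    moreover have "cv c t i * 2 mod 4 = 0" using i unfolding cv_def by simp
    ultimately show "i \<in> {i. i < n \<and> ev i 2 \<in> canon n c t}" using ev_in_Kv[of i n 2] unfolding canon_def by simp
  qed
  thus "inv2 n (canon n c t) = t" unfolding inv2_def by simp
qed

lemma no_triv: assumes "n \<ge> 1" "C \<subseteq> {f. zvec 4 n f}" "\<And>k. k < n \<Longrightarrow> \<exists>x\<in>C. x k \<noteq> 0"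
  shows "\<not> (\<exists>D. is_code (n - 1) D \<and> code_equiv n C (triv_ext D))"
proof
  assume "\<exists>D. is_code (n - 1) D \<and> code_equiv n C (triv_ext D)"
  then obtain D where D: "is_code (n - 1) D" "code_equiv n C D" unfolding triv_ext_def by auto
  obtain \<sigma> s where h: "\<sigma> permutes {0..<n}" "signs s" "D = T \<sigma> s ` C" using D(2) code_equiv_T by blast
  have k: "\<sigma> (n-1) < n" using Permutations.permutes_nat_less[OF h(1)] assms(1) by simp
  obtain x where x: "x \<in> C" "x (\<sigma> (n-1)) \<noteq> 0" using assms(3)[OF k] by blast
  have "T \<sigma> s x \<in> D" using h(3) x(1) by auto
  hence "T \<sigma> s x (n-1) = 0" using is_codeD(1)[OF D(1)] zvecD2[of 4 "n-1" "T \<sigma> s x" "n-1"] by auto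
  hence "(s (n-1) * x (\<sigma> (n-1))) mod 4 = 0" unfolding T_def by simp
  hence a: "(s (n-1) * ((s (n-1) * x (\<sigma> (n-1))) mod 4)) mod 4 = 0" by simp
  have "zvec 4 n x" using x(1) assms(2) by auto
  hence "(s (n-1) * ((s (n-1) * x (\<sigma> (n-1))) mod 4)) mod 4 = x (\<sigma> (n-1))"
    using sign_cancel[OF h(2)] zvecD by blast
  hence "x (\<sigma> (n-1)) = 0" using a by simp
  thus False using x(2) by simp
qed

lemma two_nonzero: assumes "p < n" "q < n" "p \<noteq> q" "0 \<le> a" "a < 4" "0 \<le> b" "b < 4"
  "(v p * a + v q * b) mod 4 = 0" "k = p \<and> a \<noteq> 0 \<or> k = q \<and> b \<noteq> 0"
  shows "\<exists>x\<in>Kv n v. x k \<noteq> 0"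
proof
  show "(\<lambda>k. ev p a k + ev q b k) \<in> Kv n v" by (rule two_in_Kv[OF assms(1-8)])
  show "ev p a k + ev q b k \<noteq> 0" using assms(3,9) unfolding ev_def by auto
qed

lemma canon_nonzero: assumes "c \<le> t" "t < n" "(c, t) \<noteq> (n-1, n-1)" "k < n"
  shows "\<exists>x\<in>canon n c t. x k \<noteq> 0"
  unfolding canon_def
proof -
  have v1: "cv c t (n-1) = 1" using assms(1,2) unfolding cv_def by auto
  have ne: "c \<noteq> n-1 \<or> t \<noteq> n-1" using assms(3) by simp
  have "k < c \<or> (c \<le> k \<and> k < t) \<or> (t \<le> k \<and> k \<noteq> n-1) \<or> (k = n-1 \<and> t < n-1) \<or> (k = n-1 \<and> t = n-1 \<and> c < n-1)"
    using assms(1,2,4) ne by presburger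
  moreover
  { assume h: "k < c"
    have "cv c t k = 0" using h unfolding cv_def by simp
    hence "ev k 1 \<in> Kv n (cv c t)" using ev_in_Kv[of k n 1 "cv c t"] assms(4) by simp
    moreover have "ev k 1 k \<noteq> 0" unfolding ev_def by simp
    ultimately have "\<exists>x\<in>Kv n (cv c t). x k \<noteq> 0" by blast }
  moreover
  { assume h: "c \<le> k \<and> k < t"
    have "cv c t k = 2" using h unfolding cv_def by simp
    hence m: "(cv c t k * 1 + cv c t (n-1) * 2) mod 4 = 0" using v1 by simp
    have "\<exists>x\<in>Kv n (cv c t). x k \<noteq> 0"
      by (rule two_nonzero[of k n "n-1" 1 2 "cv c t" k, OF _ _ _ _ _ _ _ m]) (use h assms(1,2,4) in auto) }
  moreover
  { assume h: "t \<le> k \<and> k \<noteq> n-1"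
    have "cv c t k = 1" using h assms(1) unfolding cv_def by simp
    hence m: "(cv c t k * 1 + cv c t (n-1) * 3) mod 4 = 0" using v1 by simp
    have "\<exists>x\<in>Kv n (cv c t). x k \<noteq> 0"
      by (rule two_nonzero[of k n "n-1" 1 3 "cv c t" k, OF _ _ _ _ _ _ _ m]) (use h assms(1,2,4) in auto) }
  moreover
  { assume h: "k = n-1 \<and> t < n-1"
    have "cv c t t = 1" using assms(1) unfolding cv_def by simp
    hence m: "(cv c t t * 3 + cv c t (n-1) * 1) mod 4 = 0" using v1 by simp
    have "\<exists>x\<in>Kv n (cv c t). x k \<noteq> 0"
      by (rule two_nonzero[of t n "n-1" 3 1 "cv c t" k, OF _ _ _ _ _ _ _ m]) (use h assms(1,2,4) in auto) }
  moreover
  { assume h: "k = n-1 \<and> t = n-1 \<and> c < n-1"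
    have a: "\<not> n-2 < c" "n - 2 < t" using h by linarith+
    have "cv c t (n-2) = 2" using a unfolding cv_def by simp
    hence m: "(cv c t (n-2) * 1 + cv c t (n-1) * 2) mod 4 = 0" using v1 by simp
    have "\<exists>x\<in>Kv n (cv c t). x k \<noteq> 0"
      by (rule two_nonzero[of "n-2" n "n-1" 1 2 "cv c t" k, OF _ _ _ _ _ _ _ m]) (use h assms(1,2,4) in auto) }
  ultimately show "\<exists>x\<in>Kv n (cv c t). x k \<noteq> 0" by blast
qed

lemma canon_in: assumes "c \<le> t" "t < n" "(c, t) \<noteq> (n-1, n-1)"
  shows "canon n c t \<in> codes_nontriv n (n-1) 0"
proof -
  have n: "n \<ge> 1" using assms by simp
  have "is_code n (canon n c t)" unfolding canon_def by (rule is_code_Kv)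
  moreover have "has_type (canon n c t) (n-1) 0" unfolding canon_def
  proof (rule has_type_Kv[OF n])
    show "cv c t (n-1) = 1" using assms(1,2) unfolding cv_def by auto
  qed
  moreover have "\<not> (\<exists>D. is_code (n - 1) D \<and> code_equiv n (canon n c t) (triv_ext D))"
    using no_triv[OF n is_codeD(1)[OF calculation(1)] canon_nonzero[OF assms]] .
  ultimately show ?thesis unfolding codes_nontriv_def by blast
qed

lemma canon_last_zero: assumes "n \<ge> 1" shows "is_code (n-1) (canon n (n-1) (n-1))"
proof -
  have ic: "is_code n (canon n (n-1) (n-1))" unfolding canon_def by (rule is_code_Kv)
  have "zvec 4 (n-1) x" if x: "x \<in> canon n (n-1) (n-1)" for x
  proof -
    have z: "zvec 4 n x" using x unfolding canon_def Kv_def by auto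
    have s0: "(\<Sum>i<n. cv (n-1) (n-1) i * x i) mod 4 = 0" using x unfolding canon_def Kv_def by blast
    have "(\<Sum>i<n. cv (n-1) (n-1) i * x i) = (\<Sum>i<n-1. cv (n-1) (n-1) i * x i) + cv (n-1) (n-1) (n-1) * x (n-1)"
      by (rule sum_split_last[OF assms])
    also have "(\<Sum>i<n-1. cv (n-1) (n-1) i * x i) = 0" by (intro sum.neutral) (simp add: cv_def)
    also have "cv (n-1) (n-1) (n-1) = 1" unfolding cv_def by simp
    finally have "(\<Sum>i<n. cv (n-1) (n-1) i * x i) = x (n-1)" by (simp only: add_0 mult_1)
    hence "x (n-1) mod 4 = 0" using s0 by (simp only:)
    hence x0: "x (n-1) = 0" by (rule mod0_small[OF conjunct1[OF zvecD[OF z]] conjunct2[OF zvecD[OF z]]])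
    have "x i = 0" if "n - 1 \<le> i" for i
    proof (cases "i = n-1")
      case True thus ?thesis using x0 by simp
    next
      case False hence "n \<le> i" using that by simp
      thus ?thesis using zvecD2[OF z] by simp
    qed
    thus ?thesis using z unfolding zvec_def by auto
  qed
  thus ?thesis using ic unfolding is_code_def by auto
qed

lemma zvec_Suc_eq: "{f. zvec m (Suc k) f} = (\<lambda>(f, r). f(k := r)) ` ({f. zvec m k f} \<times> {0..<m})"
proof (intro set_eqI iffI)
  fix g assume g: "g \<in> {f. zvec m (Suc k) f}"
  have "g = (\<lambda>(f, r). f(k := r)) (g(k := 0), g k)" by simp
  moreover have "(g(k := 0), g k) \<in> {f. zvec m k f} \<times> {0..<m}" using g unfolding zvec_def by auto
  ultimately show "g \<in> (\<lambda>(f, r). f(k := r)) ` ({f. zvec m k f} \<times> {0..<m})" by blast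
next
  fix g assume "g \<in> (\<lambda>(f, r). f(k := r)) ` ({f. zvec m k f} \<times> {0..<m})"
  then obtain f r where "g = f(k := r)" "zvec m k f" "0 \<le> r" "r < m" by auto
  thus "g \<in> {f. zvec m (Suc k) f}" unfolding zvec_def by auto
qed

lemma zvec_Suc_inj: "inj_on (\<lambda>(f, r). f(k := r)) ({f. zvec m k f} \<times> {0..<m})"
proof (rule inj_onI, clarify)
  fix f r f' r' assume h: "zvec m k f" "zvec m k f'" "f(k := r) = f'(k := r')"
  have "r = r'" using fun_cong[OF h(3), of k] by simp
  moreover have "f = f'"
  proof
    fix i show "f i = f' i"
    proof (cases "i = k")
      case True thus ?thesis using zvecD2[OF h(1), of i] zvecD2[OF h(2), of i] by simp
    next
      case False thus ?thesis using fun_cong[OF h(3), of i] by simp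
    qed
  qed
  ultimately show "f = f' \<and> r = r'" by simp
qed

lemma card_zvec: assumes "0 < m" shows "finite {f. zvec m k f} \<and> card {f. zvec m k f} = nat m ^ k"
proof (induction k)
  case 0
  have "{f. zvec m 0 f} = (if 0 < m then {\<lambda>_. 0} else {})" unfolding zvec_def by auto
  thus ?case using assms by auto
next
  case (Suc k)
  have fin: "finite ({f. zvec m k f} \<times> {0..<m})" using Suc by simp
  have "card {f. zvec m (Suc k) f} = card ({f. zvec m k f} \<times> {0..<m})"
    unfolding zvec_Suc_eq by (rule card_image[OF zvec_Suc_inj])
  also have "\<dots> = nat m ^ k * nat m" using Suc by (simp add: card_cartesian_product)
  finally show ?case using fin unfolding zvec_Suc_eq by (simp add: mult.commute)
qed

lemma card_zvec_even: "finite {f. zvec 4 k f \<and> (\<forall>i. f i \<in> {0, 2})} \<and> card {f. zvec 4 k f \<and> (\<forall>i. f i \<in> {0, 2})} = 2 ^ k"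
proof -
  have eq: "{f. zvec 4 k f \<and> (\<forall>i. f i \<in> {0, 2})} = (\<lambda>f i. 2 * f i) ` {f. zvec 2 k f}"
  proof (intro set_eqI iffI)
    fix f assume f: "f \<in> {f. zvec 4 k f \<and> (\<forall>i. f i \<in> {0, 2})}"
    have "f = (\<lambda>i. 2 * (f i div 2))"
    proof
      fix i have "f i = 0 \<or> f i = 2" using f by auto
      thus "f i = 2 * (f i div 2)" by auto
    qed
    moreover have "zvec 2 k (\<lambda>i. f i div 2)" unfolding zvec_def
    proof (intro conjI allI impI)
      fix i
      have "f i = 0 \<or> f i = 2" using f by auto
      thus "0 \<le> f i div 2" "f i div 2 < 2" by auto
    next
      fix i assume "k \<le> i" thus "f i div 2 = 0" using f unfolding zvec_def by auto
    qed
    ultimately show "f \<in> (\<lambda>f i. 2 * f i) ` {f. zvec 2 k f}" by (intro image_eqI[where x="\<lambda>i. f i div 2"]) auto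
  next
    fix g assume "g \<in> (\<lambda>f i. 2 * f i) ` {f. zvec 2 k f}"
    then obtain f where f: "g = (\<lambda>i. 2 * f i)" "zvec 2 k f" by auto
    have "f i = 0 \<or> f i = 1" for i using zvecD[OF f(2), of i] by auto
    thus "g \<in> {f. zvec 4 k f \<and> (\<forall>i. f i \<in> {0, 2})}" using f unfolding zvec_def by fastforce
  qed
  have inj: "inj_on (\<lambda>f i. 2 * f i) {f. zvec 2 k (f :: nat \<Rightarrow> int)}"
  proof (rule inj_onI)
    fix f g :: "nat \<Rightarrow> int" assume "(\<lambda>i. 2 * f i) = (\<lambda>i. 2 * g i)"
    thus "f = g" by (auto simp: fun_eq_iff)
  qed
  show ?thesis unfolding eq using card_image[OF inj] card_zvec[of 2 k] by simp
qed

lemma lincomb: assumes "is_code n C" "finite I" "\<And>i. i \<in> I \<Longrightarrow> u i \<in> C"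
  shows "(\<lambda>k. (\<Sum>i\<in>I. a i * u i k) mod 4) \<in> C"
  using assms(2,3)
proof (induction I rule: finite_induct)
  case empty
  thus ?case using is_codeD(2)[OF assms(1)] by simp
next
  case (insert j I)
  have "(\<lambda>k. (\<Sum>i\<in>insert j I. a i * u i k) mod 4) = add_mod 4 (\<lambda>k. (a j * u j k) mod 4) (\<lambda>k. (\<Sum>i\<in>I. a i * u i k) mod 4)"
    unfolding add_mod_def using insert(1,2) by (auto simp: mod_add_eq)
  moreover have "(\<lambda>k. (a j * u j k) mod 4) \<in> C" using is_codeD(4)[OF assms(1) insert(4)[of j]] by simp
  moreover have "(\<lambda>k. (\<Sum>i\<in>I. a i * u i k) mod 4) \<in> C" using insert by simp
  ultimately show ?case using is_codeD(3)[OF assms(1)] by simp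
qed

lemma double_zero: fixes x :: int assumes "0 \<le> x" "x < 4" "(x + x) mod 4 = x" shows "x = 0"
proof -
  have "x = 0 \<or> x = 1 \<or> x = 2 \<or> x = 3" using assms(1,2) by linarith
  thus ?thesis using assms(3) by auto
qed

lemma double_even: fixes x :: int assumes "0 \<le> x" "x < 4" "(x + x) mod 4 = 0" shows "x \<in> {0, 2}"
proof -
  have "x = 0 \<or> x = 1 \<or> x = 2 \<or> x = 3" using assms(1,2) by linarith
  thus ?thesis using assms(3) by auto
qed

lemma type_card: assumes "has_type C k 0"
  shows "finite C" "card C = 4 ^ k"
proof -
  obtain \<phi> where b: "bij_betw \<phi> C {(a, b). zvec 4 k a \<and> zvec 2 0 b}" using assms unfolding has_type_def by blast
  have eq: "{(a, b). zvec 4 k a \<and> zvec 2 0 b} = {a. zvec 4 k a} \<times> {\<lambda>_. 0}" unfolding zvec_def by auto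
  have f: "finite {(a, b). zvec 4 k a \<and> zvec 2 0 b}" unfolding eq using card_zvec[of 4 k] by simp
  have c: "card {(a, b). zvec 4 k a \<and> zvec 2 0 b} = 4 ^ k" unfolding eq using card_zvec[of 4 k] by (simp add: card_cartesian_product)
  show "finite C" using bij_betw_finite[OF b] f by simp
  show "card C = 4 ^ k" using bij_betw_same_card[OF b] c by simp
qed

lemma type_order2: assumes "has_type C k 0" "is_code n C" "E \<subseteq> C" "\<And>x. x \<in> E \<Longrightarrow> add_mod 4 x x = (\<lambda>_. 0)"
  shows "card E \<le> 2 ^ k"
proof -
  obtain \<phi> where b: "bij_betw \<phi> C {(a, b). zvec 4 k a \<and> zvec 2 0 b}"
    and hom: "\<forall>x\<in>C. \<forall>y\<in>C. \<phi> (add_mod 4 x y) = (add_mod 4 (fst (\<phi> x)) (fst (\<phi> y)), add_mod 2 (snd (\<phi> x)) (snd (\<phi> y)))"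
    using assms(1) unfolding has_type_def by blast
  have inC: "\<phi> x \<in> {(a, b). zvec 4 k a \<and> zvec 2 0 b}" if "x \<in> C" for x using b that unfolding bij_betw_def by auto
  have z0: "(\<lambda>_. 0) \<in> C" using is_codeD(2)[OF assms(2)] .
  have snd0: "snd (\<phi> x) = (\<lambda>_. 0)" if "x \<in> C" for x
  proof -
    obtain a b where ab: "\<phi> x = (a, b)" by fastforce
    hence "zvec 2 0 b" using inC[OF that] by simp
    hence "b = (\<lambda>_. 0)" unfolding zvec_def by auto
    thus ?thesis using ab by simp
  qed
  have a00: "add_mod 4 (\<lambda>_. 0::int) (\<lambda>_. 0) = (\<lambda>_. 0)" unfolding add_mod_def by simp
  have phi0: "fst (\<phi> (\<lambda>_. 0)) = (\<lambda>_. 0)"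
  proof
    fix i
    let ?a = "fst (\<phi> (\<lambda>_. 0))"
    have "\<phi> (\<lambda>_. 0) = \<phi> (add_mod 4 (\<lambda>_. 0) (\<lambda>_. 0))" using a00 by simp
    also have "\<dots> = (add_mod 4 ?a ?a, add_mod 2 (snd (\<phi> (\<lambda>_. 0))) (snd (\<phi> (\<lambda>_. 0))))" using hom z0 by blast
    finally have e: "\<phi> (\<lambda>_. 0) = (add_mod 4 ?a ?a, add_mod 2 (snd (\<phi> (\<lambda>_. 0))) (snd (\<phi> (\<lambda>_. 0))))" .
    have "?a = add_mod 4 ?a ?a" using arg_cong[OF e, of fst] by simp
    hence h: "(?a i + ?a i) mod 4 = ?a i" using fun_cong[of "?a" "add_mod 4 ?a ?a" i] unfolding add_mod_def by simp
    have "zvec 4 k ?a" using inC[OF z0] by (auto split: prod.splits)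
    hence "0 \<le> ?a i" "?a i < 4" using zvecD by auto
    thus "?a i = 0" using double_zero h by simp
  qed
  define g where "g = (\<lambda>x. fst (\<phi> x))"
  have "inj_on g E"
  proof (rule inj_onI)
    fix x y assume xy: "x \<in> E" "y \<in> E" "g x = g y"
    have "snd (\<phi> x) = (\<lambda>_. 0)" "snd (\<phi> y) = (\<lambda>_. 0)" using snd0 xy assms(3) by auto
    hence "\<phi> x = \<phi> y" using xy(3) unfolding g_def by (simp add: prod_eq_iff)
    thus "x = y" using b xy assms(3) unfolding bij_betw_def inj_on_def by blast
  qed
  moreover have "g ` E \<subseteq> {f. zvec 4 k f \<and> (\<forall>i. f i \<in> {0, 2})}"
  proof
    fix a assume "a \<in> g ` E"
    then obtain x where x: "x \<in> E" "a = g x" by auto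
    have xC: "x \<in> C" using x(1) assms(3) by auto
    have e1: "\<phi> (add_mod 4 x x) = (add_mod 4 a a, add_mod 2 (snd (\<phi> x)) (snd (\<phi> x)))"
      using hom xC unfolding x(2) g_def by blast
    have "fst (\<phi> (add_mod 4 x x)) = (\<lambda>_. 0)" using assms(4)[OF x(1)] phi0 by simp
    hence aa: "add_mod 4 a a = (\<lambda>_. 0)" using e1 by simp
    have za: "zvec 4 k a" using inC[OF xC] unfolding x(2) g_def by auto
    have "a i \<in> {0, 2}" for i
    proof (rule double_even)
      show "0 \<le> a i" "a i < 4" using zvecD[OF za, of i] by auto
      show "(a i + a i) mod 4 = 0" using fun_cong[OF aa, of i] unfolding add_mod_def by simp
    qed
    thus "a \<in> {f. zvec 4 k f \<and> (\<forall>i. f i \<in> {0, 2})}" using za by simp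
  qed
  ultimately have "card (g ` E) \<le> card {f. zvec 4 k f \<and> (\<forall>i. f i \<in> {0, 2})}"
    using card_zvec_even[of k] by (intro card_mono) auto
  hence "card (g ` E) \<le> 2 ^ k" using card_zvec_even[of k] by simp
  thus ?thesis using card_image[OF \<open>inj_on g E\<close>] by simp
qed

lemma sum_ev_k: "(\<Sum>i<n. a i * ev i r k) = (if k < n then a k * r else 0)"
proof -
  have "(\<Sum>i<n. a i * ev i r k) = (\<Sum>i<n. if k = i then a i * r else 0)"
    unfolding ev_def by (intro sum.cong) auto
  also have "\<dots> = (if k < n then a k * r else 0)" by (simp add: sum.delta)
  finally show ?thesis .
qed

lemma exists_j: assumes "is_code n C" "has_type C (n-1) 0" "n \<ge> 1"
  shows "\<exists>j<n. ev j 2 \<notin> C"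
proof (rule ccontr)
  assume "\<not> (\<exists>j<n. ev j 2 \<notin> C)"
  hence all: "\<And>j. j < n \<Longrightarrow> ev j 2 \<in> C" by blast
  define E where "E = {f. zvec 4 n f \<and> (\<forall>i. f i \<in> {0, 2})}"
  have "E \<subseteq> C"
  proof
    fix f assume f: "f \<in> E"
    have "(\<lambda>k. (\<Sum>i<n. (f i div 2) * ev i 2 k) mod 4) \<in> C"
      by (rule lincomb[OF assms(1)]) (use all in auto)
    moreover have "(\<lambda>k. (\<Sum>i<n. (f i div 2) * ev i 2 k) mod 4) = f"
    proof
      fix k
      have fk: "f k = 0 \<or> f k = 2" using f unfolding E_def by auto
      show "(\<Sum>i<n. (f i div 2) * ev i 2 k) mod 4 = f k"
      proof (cases "k < n")
        case True thus ?thesis unfolding sum_ev_k using fk by auto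
      next
        case False thus ?thesis unfolding sum_ev_k using f unfolding E_def zvec_def by auto
      qed
    qed
    ultimately show "f \<in> C" by simp
  qed
  moreover have "add_mod 4 x x = (\<lambda>_. 0)" if "x \<in> E" for x
  proof
    fix i
    have "x i = 0 \<or> x i = 2" using that unfolding E_def by auto
    thus "add_mod 4 x x i = 0" unfolding add_mod_def by auto
  qed
  ultimately have "card E \<le> 2 ^ (n-1)" using type_order2[OF assms(2) assms(1)] by blast
  moreover have "card E = 2 ^ n" unfolding E_def using card_zvec_even by blast
  moreover have "(2::nat) ^ (n-1) < 2 ^ n" using assms(3) by simp
  ultimately show False by linarith
qed

lemma diff_zero: fixes a b :: int assumes "0 \<le> a" "a < 4" "0 \<le> b" "b < 4" "(a + (3 * b) mod 4) mod 4 = 0"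
  shows "a = b"
proof -
  have "a = 0 \<or> a = 1 \<or> a = 2 \<or> a = 3" "b = 0 \<or> b = 1 \<or> b = 2 \<or> b = 3" using assms(1-4) by linarith+
  thus ?thesis using assms(5) by auto
qed

lemma pi_inj: assumes "is_code n C" "ev j 2 \<notin> C" shows "inj_on (\<lambda>x. x(j := 0)) C"
proof (rule inj_onI)
  fix x y assume x: "x \<in> C" and y: "y \<in> C" and e: "x(j := 0) = y(j := 0)"
  have zx: "zvec 4 n x" and zy: "zvec 4 n y" using x y is_codeD(1)[OF assms(1)] by auto
  define d where "d = add_mod 4 x (\<lambda>k. (3 * y k) mod 4)"
  have dC: "d \<in> C" unfolding d_def using is_codeD(3)[OF assms(1) x is_codeD(4)[OF assms(1) y]] .
  have "d = ev j (d j)"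
  proof
    fix k show "d k = ev j (d j) k"
    proof (cases "k = j")
      case True thus ?thesis unfolding ev_def by simp
    next
      case False
      hence "y k = x k" using fun_cong[OF e, of k] by simp
      hence "d k = (x k + (3 * x k) mod 4) mod 4" unfolding d_def add_mod_def by simp
      also have "\<dots> = (4 * x k) mod 4" by (simp add: mod_add_right_eq)
      also have "\<dots> = 0" by simp
      finally show ?thesis using False unfolding ev_def by simp
    qed
  qed
  have r: "0 \<le> d j" "d j < 4" unfolding d_def add_mod_def by auto
  have "d j = 0"
  proof (rule ccontr)
    assume nz: "d j \<noteq> 0"
    have "d j = 1 \<or> d j = 2 \<or> d j = 3" using r nz by linarith
    moreover have ejC: "ev j (d j) \<in> C" using dC \<open>d = ev j (d j)\<close> by simp
    moreover have "ev j ((2 * d j) mod 4) \<in> C" using ev_scale[OF assms(1) ejC, of 2] .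
    ultimately have "ev j 2 \<in> C" by auto
    thus False using assms(2) by simp
  qed
  hence "(x j + (3 * y j) mod 4) mod 4 = 0" unfolding d_def add_mod_def by simp
  hence "x j = y j" using diff_zero[OF conjunct1[OF zvecD[OF zx, of j]] conjunct2[OF zvecD[OF zx, of j]] conjunct1[OF zvecD[OF zy, of j]] conjunct2[OF zvecD[OF zy, of j]]] by simp
  show "x = y"
  proof
    fix k show "x k = y k" using fun_cong[OF e, of k] \<open>x j = y j\<close> by (cases "k = j") auto
  qed
qed

lemma card_Zj: assumes "j < n"
  shows "finite {f. zvec 4 n f \<and> f j = 0} \<and> card {f. zvec 4 n f \<and> f j = 0} = 4 ^ (n-1)"
proof -
  let ?Z = "{f. zvec 4 n f \<and> f j = 0}"
  have eq: "{f. zvec 4 n f} = (\<lambda>(f, r). f(j := r)) ` (?Z \<times> {0..<4})"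
  proof (intro set_eqI iffI)
    fix g assume g: "g \<in> {f. zvec 4 n f}"
    have "g = (\<lambda>(f, r). f(j := r)) (g(j := 0), g j)" by simp
    moreover have "(g(j := 0), g j) \<in> ?Z \<times> {0..<4}" using g unfolding zvec_def by auto
    ultimately show "g \<in> (\<lambda>(f, r). f(j := r)) ` (?Z \<times> {0..<4})" by blast
  next
    fix g assume "g \<in> (\<lambda>(f, r). f(j := r)) ` (?Z \<times> {0..<4})"
    then obtain f r where "g = f(j := r)" "zvec 4 n f" "0 \<le> r" "r < 4" by auto
    thus "g \<in> {f. zvec 4 n f}" using assms unfolding zvec_def by auto
  qed
  have inj: "inj_on (\<lambda>(f, r). f(j := r)) (?Z \<times> {0..<4})"
  proof (rule inj_onI, clarify)
    fix f r f' r' assume h: "zvec 4 n f" "f j = 0" "zvec 4 n f'" "f' j = 0" "f(j := r) = f'(j := r')"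
    have "r = r'" using fun_cong[OF h(5), of j] by simp
    moreover have "f = f'"
    proof
      fix i show "f i = f' i"
      proof (cases "i = j")
        case True thus ?thesis using h(2,4) by simp
      next
        case False thus ?thesis using fun_cong[OF h(5), of i] by simp
      qed
    qed
    ultimately show "f = f' \<and> r = r'" by simp
  qed
  have fin: "finite ?Z" using card_zvec[of 4 n] by (auto intro: finite_subset)
  have "card {f. zvec 4 n f} = card (?Z \<times> {0..<(4::int)})" unfolding eq by (rule card_image[OF inj])
  hence "4 ^ n = card ?Z * 4" using card_zvec[of 4 n] by (simp add: card_cartesian_product)
  moreover have "(4::nat) ^ n = 4 ^ (n-1) * 4" using assms by (cases n) auto
  ultimately show ?thesis using fin by simp
qed

lemma Kv_form: assumes ic: "is_code n C" and ht: "has_type C (n-1) 0" and n: "n \<ge> 1"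
  shows "\<exists>v j. j < n \<and> v j = 1 \<and> (\<forall>i. 0 \<le> v i \<and> v i < 4) \<and> C = Kv n v"
proof -
  obtain j where j: "j < n" "ev j 2 \<notin> C" using exists_j[OF assms] by blast
  let ?Z = "{f. zvec 4 n f \<and> f j = 0}"
  define \<pi> where "\<pi> = (\<lambda>x::nat \<Rightarrow> int. x(j := 0))"
  have inj: "inj_on \<pi> C" unfolding \<pi>_def using pi_inj[OF ic j(2)] .
  have zC: "\<And>x. x \<in> C \<Longrightarrow> zvec 4 n x" using is_codeD(1)[OF ic] by auto
  have sub: "\<pi> ` C \<subseteq> ?Z" unfolding \<pi>_def using zC unfolding zvec_def by auto
  have cC: "card (\<pi> ` C) = 4 ^ (n-1)" using card_image[OF inj] type_card(2)[OF ht] by simp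
  have surj: "\<pi> ` C = ?Z" using card_subset_eq[of ?Z "\<pi> ` C"] card_Zj[OF j(1)] sub cC by simp
  define I where "I = {..<n} - {j}"
  have "\<forall>i\<in>I. \<exists>u\<in>C. \<pi> u = ev i 1"
  proof
    fix i assume "i \<in> I"
    hence "ev i 1 \<in> ?Z" unfolding I_def ev_def zvec_def by auto
    thus "\<exists>u\<in>C. \<pi> u = ev i 1" using surj by (metis imageE)
  qed
  then obtain u where u: "\<And>i. i \<in> I \<Longrightarrow> u i \<in> C \<and> \<pi> (u i) = ev i 1" by metis
  define v where "v = (\<lambda>i. if i = j then 1 else (- u i j) mod 4)"
  have sumsplit: "(\<Sum>i<n. f i) = f j + (\<Sum>i\<in>I. f i)" for f :: "nat \<Rightarrow> int"
    unfolding I_def using j(1) by (simp add: sum.remove)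
  have finI: "finite I" unfolding I_def by simp
  have sub1: "C \<subseteq> Kv n v"
  proof
    fix x assume x: "x \<in> C"
    define y where "y = (\<lambda>k. (\<Sum>i\<in>I. x i * u i k) mod 4)"
    have yC: "y \<in> C" unfolding y_def by (rule lincomb[OF ic finI]) (use u in auto)
    have "\<pi> y = \<pi> x"
    proof
      fix k show "\<pi> y k = \<pi> x k"
      proof (cases "k = j")
        case True thus ?thesis unfolding \<pi>_def by simp
      next
        case False
        have "(\<Sum>i\<in>I. x i * u i k) = (\<Sum>i\<in>I. x i * ev i 1 k)"
        proof (rule sum.cong)
          fix i assume "i \<in> I"
          hence "\<pi> (u i) k = ev i 1 k" using u by simp
          thus "x i * u i k = x i * ev i 1 k" using False unfolding \<pi>_def by simp
        qed simp
        also have "\<dots> = (\<Sum>i\<in>I. if k = i then x i else 0)" unfolding ev_def by (intro sum.cong) auto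
        also have "\<dots> = (if k \<in> I then x k else 0)" using finI by (simp add: sum.delta)
        finally have s: "(\<Sum>i\<in>I. x i * u i k) = (if k \<in> I then x k else 0)" .
        show ?thesis
        proof (cases "k < n")
          case True
          hence "k \<in> I" using False unfolding I_def by simp
          thus ?thesis using s False zvecD[OF zC[OF x], of k] unfolding \<pi>_def y_def by simp
        next
          case f2: False
          hence "k \<notin> I" unfolding I_def by simp
          thus ?thesis using s False f2 zvecD2[OF zC[OF x], of k] unfolding \<pi>_def y_def by simp
        qed
      qed
    qed
    hence "y = x" using inj yC x unfolding inj_on_def by blast
    hence xj: "x j = (\<Sum>i\<in>I. x i * u i j) mod 4" unfolding y_def by (metis)
    have "(\<Sum>i<n. v i * x i) mod 4 = (x j + (\<Sum>i\<in>I. v i * x i)) mod 4"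
      using sumsplit[of "\<lambda>i. v i * x i"] unfolding v_def by simp
    also have "(\<Sum>i\<in>I. v i * x i) = (\<Sum>i\<in>I. ((- u i j) mod 4) * x i)"
      unfolding v_def I_def by (intro sum.cong) auto
    also have "(x j + \<dots>) mod 4 = (x j + (\<Sum>i\<in>I. (- u i j) * x i)) mod 4"
      using sum_mod_inner2[of "\<lambda>i. - u i j" x I] by (metis mod_add_right_eq)
    also have "(\<Sum>i\<in>I. (- u i j) * x i) = - (\<Sum>i\<in>I. x i * u i j)"
      by (simp add: sum_negf[symmetric] algebra_simps)
    also have "(x j + - (\<Sum>i\<in>I. x i * u i j)) mod 4 = 0"
    proof -
      let ?S = "\<Sum>i\<in>I. x i * u i j"
      have "(x j + - ?S) mod 4 = (?S mod 4 + - ?S) mod 4" using xj by simp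
      also have "\<dots> = (?S + - ?S) mod 4" by (simp only: mod_add_left_eq)
      finally show ?thesis by simp
    qed
    finally show "x \<in> Kv n v" using zC[OF x] unfolding Kv_def by simp
  qed
  have "Kv n v \<subseteq> C"
  proof
    fix x assume x: "x \<in> Kv n v"
    have zx: "zvec 4 n x" using x unfolding Kv_def by simp
    have "\<pi> x \<in> ?Z" using zx unfolding \<pi>_def zvec_def by auto
    then obtain z where z: "z \<in> C" "\<pi> z = \<pi> x" using surj by (metis imageE)
    have zK: "z \<in> Kv n v" using sub1 z(1) by auto
    have agree: "z i = x i" if "i \<noteq> j" for i using fun_cong[OF z(2), of i] that unfolding \<pi>_def by simp
    have vj: "v j = 1" unfolding v_def by simp
    have sI: "(\<Sum>i\<in>I. v i * z i) = (\<Sum>i\<in>I. v i * x i)" using agree unfolding I_def by (intro sum.cong) auto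
    have "((\<Sum>i\<in>I. v i * x i) + z j) mod 4 = 0"
      using zK sumsplit[of "\<lambda>i. v i * z i"] vj sI unfolding Kv_def by (simp add: add.commute)
    moreover have "((\<Sum>i\<in>I. v i * x i) + x j) mod 4 = 0"
      using x sumsplit[of "\<lambda>i. v i * x i"] vj unfolding Kv_def by (simp add: add.commute)
    ultimately have m: "z j mod 4 = x j mod 4" by (rule cancel_mod4)
    have "z j = x j" using small_eq[OF conjunct1[OF zvecD[OF zC[OF z(1)], of j]] conjunct2[OF zvecD[OF zC[OF z(1)], of j]]
       conjunct1[OF zvecD[OF zx, of j]] conjunct2[OF zvecD[OF zx, of j]] m] .
    hence "z = x" using agree by (intro ext) (metis)
    thus "x \<in> C" using z(1) by simp
  qed
  hence "C = Kv n v" using sub1 by blast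
  moreover have "v j = 1" "\<forall>i. 0 \<le> v i \<and> v i < 4" unfolding v_def by auto
  ultimately show ?thesis using j(1) by blast
qed

lemma sort_perm: fixes w :: "nat \<Rightarrow> int"
  assumes vals: "\<And>i. i < n \<Longrightarrow> w i \<in> {0, 1, 2}" and j: "j < n" "w j = 1"
  shows "\<exists>\<sigma> c t. \<sigma> permutes {0..<n} \<and> c \<le> t \<and> t < n \<and> (\<forall>i<n. w (\<sigma> i) = cv c t i)"
proof -
  define A0 where "A0 = {i. i < n \<and> w i = 0}"
  define A2 where "A2 = {i. i < n \<and> w i = 2}"
  define A1 where "A1 = {i. i < n \<and> w i = 1}"
  have fin: "finite A0" "finite A2" "finite A1" unfolding A0_def A2_def A1_def by auto
  have un: "{0..<n} = A0 \<union> A2 \<union> A1"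
  proof (intro set_eqI iffI)
    fix x assume x: "x \<in> {0..<n}"
    hence "w x \<in> {0, 1, 2}" using vals by simp
    thus "x \<in> A0 \<union> A2 \<union> A1" using x unfolding A0_def A2_def A1_def by auto
  next
    fix x assume "x \<in> A0 \<union> A2 \<union> A1" thus "x \<in> {0..<n}" unfolding A0_def A2_def A1_def by auto
  qed
  have d1: "A0 \<inter> A2 = {}" "(A0 \<union> A2) \<inter> A1 = {}" unfolding A0_def A2_def A1_def by auto
  have "n = card A0 + card A2 + card A1"
  proof -
    have "n = card {0..<n}" by simp
    also have "\<dots> = card (A0 \<union> A2 \<union> A1)" using un by simp
    also have "\<dots> = card (A0 \<union> A2) + card A1" using fin d1 by (simp add: card_Un_disjoint)
    also have "card (A0 \<union> A2) = card A0 + card A2" using fin d1 by (simp add: card_Un_disjoint)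
    finally show ?thesis .
  qed
  moreover have "card A1 \<ge> 1"
  proof -
    have "j \<in> A1" using j unfolding A1_def by simp
    hence "A1 \<noteq> {}" by auto
    thus ?thesis using fin(3) by (simp add: Suc_leI card_gt_0_iff)
  qed
  ultimately have cn: "card A0 + card A2 + card A1 = n" "card A1 \<ge> 1" by auto
  define c where "c = card A0"
  define t where "t = card A0 + card A2"
  have ct: "c \<le> t" "t < n" using cn unfolding c_def t_def by auto
  obtain g0 where g0: "bij_betw g0 {0..<c} A0" using finite_same_card_bij[of "{0..<c}" A0] fin unfolding c_def by auto
  obtain g2 where g2: "bij_betw g2 {c..<t} A2" using finite_same_card_bij[of "{c..<t}" A2] fin unfolding c_def t_def by auto
  obtain g1 where g1: "bij_betw g1 {t..<n} A1" using finite_same_card_bij[of "{t..<n}" A1] fin cn unfolding c_def t_def by auto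
  define \<sigma> where "\<sigma> = (\<lambda>i. if i < c then g0 i else if i < t then g2 i else if i < n then g1 i else i)"
  have b0: "bij_betw \<sigma> {0..<c} A0" using g0 by (rule bij_betw_cong[THEN iffD1, rotated]) (auto simp: \<sigma>_def)
  have b2: "bij_betw \<sigma> {c..<t} A2" using g2 by (rule bij_betw_cong[THEN iffD1, rotated]) (auto simp: \<sigma>_def)
  have b1: "bij_betw \<sigma> {t..<n} A1" using g1 ct by (intro bij_betw_cong[THEN iffD1, rotated, OF g1]) (auto simp: \<sigma>_def)
  have "bij_betw \<sigma> ({0..<c} \<union> {c..<t} \<union> {t..<n}) (A0 \<union> A2 \<union> A1)"
    by (intro bij_betw_combine b0 b1 b2 d1)
  moreover have "{0..<c} \<union> {c..<t} \<union> {t..<n} = {0..<n}" using ct by auto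
  ultimately have "bij_betw \<sigma> {0..<n} {0..<n}" using un by simp
  hence perm: "\<sigma> permutes {0..<n}" by (rule bij_imp_permutes) (use ct in \<open>auto simp: \<sigma>_def\<close>)
  have "w (\<sigma> i) = cv c t i" if i: "i < n" for i
  proof -
    consider "i < c" | "c \<le> i" "i < t" | "t \<le> i" by linarith
    thus ?thesis
    proof cases
      case 1 hence "\<sigma> i \<in> A0" using bij_betwE[OF b0] by auto
      thus ?thesis using 1 unfolding A0_def cv_def by simp
    next
      case 2 hence "\<sigma> i \<in> A2" using bij_betwE[OF b2] by auto
      thus ?thesis using 2 unfolding A2_def cv_def by simp
    next
      case 3 hence "\<sigma> i \<in> A1" using bij_betwE[OF b1] i by auto
      thus ?thesis using 3 ct unfolding A1_def cv_def by simp
    qed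
  qed
  thus ?thesis using perm ct by blast
qed

lemma classify: assumes ic: "is_code n C" and ht: "has_type C (n-1) 0" and n: "n \<ge> 1"
  shows "\<exists>c t. c \<le> t \<and> t < n \<and> code_equiv n C (canon n c t)"
proof -
  obtain v j where vj: "j < n" "v j = 1" "\<forall>i. 0 \<le> v i \<and> v i < 4" "C = Kv n v" using Kv_form[OF assms] by blast
  define s where "s = (\<lambda>i. if v i = 3 then -1 else (1::int))"
  have sg: "signs s" unfolding signs_def s_def by auto
  define w where "w = (\<lambda>i. (s i * v i) mod 4)"
  have e1: "T id s ` Kv n v = Kv n w"
  proof -
    have "T id s ` Kv n v = Kv n (\<lambda>i. s i * v (id i))" by (rule T_Kv[OF permutes_id sg])
    also have "\<dots> = Kv n w" by (rule Kv_cong) (simp add: w_def)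
    finally show ?thesis .
  qed
  have wv: "w i \<in> {0, 1, 2}" if "i < n" for i
  proof -
    have "0 \<le> v i" "v i < 4" using vj(3) by auto
    hence "v i = 0 \<or> v i = 1 \<or> v i = 2 \<or> v i = 3" by linarith
    thus ?thesis unfolding w_def s_def by auto
  qed
  have wj: "w j = 1" unfolding w_def s_def using vj(2) by simp
  obtain \<sigma> c t where st: "\<sigma> permutes {0..<n}" "c \<le> t" "t < n" "\<forall>i<n. w (\<sigma> i) = cv c t i"
    using sort_perm[of n w j, OF wv vj(1) wj] by blast
  have sg1: "signs (\<lambda>_. 1)" unfolding signs_def by simp
  have e2: "T \<sigma> (\<lambda>_. 1) ` Kv n w = canon n c t"
  proof -
    have "T \<sigma> (\<lambda>_. 1) ` Kv n w = Kv n (\<lambda>i. 1 * w (\<sigma> i))" by (rule T_Kv[OF st(1) sg1])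
    also have "\<dots> = canon n c t" unfolding canon_def by (rule Kv_cong) (simp add: st(4))
    finally show ?thesis .
  qed
  have "code_equiv n C (Kv n w)" unfolding code_equiv_T vj(4) using e1 sg by (metis permutes_id)
  moreover have "code_equiv n (Kv n w) (canon n c t)" unfolding code_equiv_T using e2 st(1) sg1 by metis
  ultimately have "code_equiv n C (canon n c t)" by (rule code_equiv_trans)
  thus ?thesis using st(2,3) by blast
qed

lemma tri_card: "finite {(c, t). c \<le> t \<and> t < (n::nat)} \<and> 2 * card {(c, t). c \<le> t \<and> t < (n::nat)} = n * (n + 1)"
proof (induction n)
  case 0 thus ?case by simp
next
  case (Suc n)
  have eq: "{(c, t). c \<le> t \<and> t < Suc n} = {(c, t). c \<le> t \<and> t < n} \<union> (\<lambda>c. (c, n)) ` {..n}" by auto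
  have disj: "{(c, t). c \<le> t \<and> t < n} \<inter> (\<lambda>c. (c, n)) ` {..n} = {}" by auto
  have ci: "card ((\<lambda>c. (c, n)) ` {..n}) = n + 1" by (subst card_image) (auto simp: inj_on_def)
  have fin: "finite {(c, t). c \<le> t \<and> t < n}" using Suc by simp
  have "card {(c, t). c \<le> t \<and> t < Suc n} = card {(c, t). c \<le> t \<and> t < n} + (n + 1)"
    unfolding eq using card_Un_disjoint[OF fin _ disj] ci by simp
  hence "2 * card {(c, t). c \<le> t \<and> t < Suc n} = n * (n + 1) + 2 * (n + 1)" using Suc by simp
  also have "\<dots> = Suc n * (Suc n + 1)" by simp
  finally show ?case using fin unfolding eq by simp
qed

lemma quotient_kernel: assumes "R = {(x, y). x \<in> A \<and> y \<in> A \<and> f x = f y}"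
  shows "card (A // R) = card (f ` A)"
proof -
  have "A // R = (\<lambda>q. {y \<in> A. f y = q}) ` (f ` A)"
  proof (intro set_eqI iffI)
    fix X assume "X \<in> A // R"
    then obtain x where x: "x \<in> A" "X = R `` {x}" unfolding quotient_def by auto
    hence "X = {y \<in> A. f y = f x}" using assms by auto
    thus "X \<in> (\<lambda>q. {y \<in> A. f y = q}) ` (f ` A)" using x(1) by auto
  next
    fix X assume "X \<in> (\<lambda>q. {y \<in> A. f y = q}) ` (f ` A)"
    then obtain x where x: "x \<in> A" "X = {y \<in> A. f y = f x}" by auto
    hence "X = R `` {x}" using assms by auto
    thus "X \<in> A // R" using x(1) unfolding quotient_def by auto
  qed
  moreover have "inj_on (\<lambda>q. {y \<in> A. f y = q}) (f ` A)"
  proof (rule inj_onI)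
    fix p q assume p: "p \<in> f ` A" and q: "q \<in> f ` A" and e: "{y \<in> A. f y = p} = {y \<in> A. f y = q}"
    obtain x where x: "x \<in> A" "f x = p" using p by auto
    hence "x \<in> {y \<in> A. f y = q}" using e by blast
    thus "p = q" using x by simp
  qed
  ultimately show ?thesis by (simp add: card_image)
qed

lemma nontriv_props: assumes n: "n \<ge> 1" and C: "C \<in> codes_nontriv n (n-1) 0"
  shows "(inv0 n C, inv2 n C) \<in> {(c, t). c \<le> t \<and> t < n} - {(n-1, n-1)}"
    "code_equiv n C (canon n (inv0 n C) (inv2 n C))"
proof -
  have ic: "is_code n C" and ht: "has_type C (n-1) 0"
    and nt: "\<not> (\<exists>D. is_code (n - 1) D \<and> code_equiv n C (triv_ext D))"
    using C unfolding codes_nontriv_def by auto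
  obtain c t where ct: "c \<le> t" "t < n" "code_equiv n C (canon n c t)" using classify[OF ic ht n] by blast
  have "inv0 n C = c" "inv2 n C = t" using inv_equiv[OF ic ct(3)] inv_canon[OF ct(1,2)] by auto
  moreover have "(c, t) \<noteq> (n-1, n-1)"
  proof
    assume e: "(c, t) = (n-1, n-1)"
    have "is_code (n-1) (canon n c t)" using canon_last_zero[OF n] e by simp
    moreover have "triv_ext (canon n c t) = canon n c t" unfolding triv_ext_def by simp
    ultimately show False using nt ct(3) by metis
  qed
  ultimately show "(inv0 n C, inv2 n C) \<in> {(c, t). c \<le> t \<and> t < n} - {(n-1, n-1)}"
    "code_equiv n C (canon n (inv0 n C) (inv2 n C))" using ct by auto
qed

theorem mainTheorem8:
  fixes n :: nat
  assumes "n \<ge> 1"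
  shows "Nprime n (n - 1) 0 = n * (n + 1) div 2 - 1"
proof -
  let ?A = "codes_nontriv n (n-1) 0"
  let ?f = "\<lambda>C. (inv0 n C, inv2 n C)"
  let ?Q = "{(c, t). c \<le> t \<and> t < n} - {(n-1, n-1)}"
  have codeA: "\<And>C. C \<in> ?A \<Longrightarrow> is_code n C" unfolding codes_nontriv_def by auto
  have R: "{(C, D). C \<in> ?A \<and> D \<in> ?A \<and> code_equiv n C D} = {(C, D). C \<in> ?A \<and> D \<in> ?A \<and> ?f C = ?f D}"
  proof (intro set_eqI iffI)
    fix p assume "p \<in> {(C, D). C \<in> ?A \<and> D \<in> ?A \<and> code_equiv n C D}"
    then obtain C D where p: "p = (C, D)" "C \<in> ?A" "D \<in> ?A" "code_equiv n C D" by auto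
    have "?f C = ?f D" using inv_equiv[OF codeA[OF p(2)] p(4)] by simp
    thus "p \<in> {(C, D). C \<in> ?A \<and> D \<in> ?A \<and> ?f C = ?f D}" using p by simp
  next
    fix p assume "p \<in> {(C, D). C \<in> ?A \<and> D \<in> ?A \<and> ?f C = ?f D}"
    then obtain C D where p: "p = (C, D)" "C \<in> ?A" "D \<in> ?A" "?f C = ?f D" by auto
    have e1: "code_equiv n C (canon n (inv0 n C) (inv2 n C))" using nontriv_props(2)[OF assms p(2)] .
    have e2: "code_equiv n D (canon n (inv0 n C) (inv2 n C))" using nontriv_props(2)[OF assms p(3)] p(4) by simp
    have "code_equiv n (canon n (inv0 n C) (inv2 n C)) D"
      by (rule code_equiv_sym[OF e2 is_codeD(1)[OF codeA[OF p(3)]]])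
    hence "code_equiv n C D" using e1 code_equiv_trans by blast
    thus "p \<in> {(C, D). C \<in> ?A \<and> D \<in> ?A \<and> code_equiv n C D}" using p by simp
  qed
  have img: "?f ` ?A = ?Q"
  proof
    show "?f ` ?A \<subseteq> ?Q"
    proof
      fix q assume "q \<in> ?f ` ?A"
      then obtain C where C: "C \<in> ?A" "q = ?f C" by blast
      show "q \<in> ?Q" unfolding C(2) by (rule nontriv_props(1)[OF assms C(1)])
    qed
  next
    show "?Q \<subseteq> ?f ` ?A"
    proof
      fix q assume q: "q \<in> ?Q"
      then obtain c t where ct: "q = (c, t)" "c \<le> t" "t < n" "(c, t) \<noteq> (n-1, n-1)" by auto
      have "canon n c t \<in> ?A" by (rule canon_in[OF ct(2,3,4)])
      moreover have "?f (canon n c t) = q" using inv_canon[OF ct(2,3)] ct(1) by simp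
      ultimately show "q \<in> ?f ` ?A" by (intro image_eqI[where x="canon n c t"]) simp_all
    qed
  qed
  have "Nprime n (n - 1) 0 = card (?f ` ?A)"
    unfolding Nprime_def R by (rule quotient_kernel) simp
  also have "\<dots> = card ?Q" using img by simp
  also have "\<dots> = card {(c, t). c \<le> t \<and> t < n} - 1"
  proof -
    have "(n-1, n-1) \<in> {(c, t). c \<le> t \<and> t < n}" using assms by simp
    thus ?thesis using tri_card[of n] by (simp add: card_Diff_singleton)
  qed
  also have "card {(c, t). c \<le> t \<and> t < n} = n * (n + 1) div 2"
  proof -
    have h: "2 * card {(c, t). c \<le> t \<and> t < n} = n * (n + 1)" using tri_card[of n] by blast
    show ?thesis by (subst h[symmetric]) simp
  qed
  finally show ?thesis .
qed

end
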